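(* Let $T$ be a $3\times2\times3$ quaternion tensor, i.e. $T=(A;B)$ with $A,B\in M_3(\mathbb{H})$. Then $\mathrm{rank}(T)\le4$.
   Context: $\mathbb{H}$ denotes the real quaternions. An $n_1\times n_2\times n_3$ quaternion tensor is an array $T=(T_{ijk})$ with entries in $\mathbb{H}$, $1\le i\le n_1$, $1\le j\le n_2$, $1\le k\le n_3$; it is written $T=(A_1;\dots;A_{n_2})$ where the frontal slice $A_j$ is the $n_1\times n_3$ matrix $(T_{ijk})_{i,k}$. A nonzero tensor is simple if $T_{ijk}=a_ib_jc_k$ (quaternion product in this order) for some $\vec a\in\mathbb{H}^{n_1},\vec b\in\mathbb{H}^{n_2},\vec c\in\mathbb{H}^{n_3}$. The rank of $T$ is the least number of simple tensors summing to $T$ (the zero tensor has rank $0$). *)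

theory Defs
  imports Complex_Main
begin

text \<open>The quaternions are not in the distribution library (only in HOL-ex / AFP),
so we define them here: q = Re + Im1 i + Im2 j + Im3 k with i^2=j^2=k^2=ijk=-1.\<close>

datatype quat = Quat (Re: real) (Im1: real) (Im2: real) (Im3: real)

lemma quat_eqI [intro?]:
  "\<lbrakk>Re x = Re y; Im1 x = Im1 y; Im2 x = Im2 y; Im3 x = Im3 y\<rbrakk> \<Longrightarrow> x = y"
  by (cases x, cases y) simp

lemma quat_eq_iff: "x = y \<longleftrightarrow> Re x = Re y \<and> Im1 x = Im1 y \<and> Im2 x = Im2 y \<and> Im3 x = Im3 y"
  by (auto intro: quat_eqI)

instantiation quat :: ring_1
begin

definition "0 = Quat 0 0 0 0"
definition "1 = Quat 1 0 0 0"
definition "x + y = Quat (Re x + Re y) (Im1 x + Im1 y) (Im2 x + Im2 y) (Im3 x + Im3 y)"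
definition "x - y = Quat (Re x - Re y) (Im1 x - Im1 y) (Im2 x - Im2 y) (Im3 x - Im3 y)"
definition "- x = Quat (- Re x) (- Im1 x) (- Im2 x) (- Im3 x)"
definition "x * y = Quat
   (Re x * Re y - Im1 x * Im1 y - Im2 x * Im2 y - Im3 x * Im3 y)
   (Re x * Im1 y + Im1 x * Re y + Im2 x * Im3 y - Im3 x * Im2 y)
   (Re x * Im2 y - Im1 x * Im3 y + Im2 x * Re y + Im3 x * Im1 y)
   (Re x * Im3 y + Im1 x * Im2 y - Im2 x * Im1 y + Im3 x * Re y)"

instance
  by standard
     (auto simp: quat_eq_iff zero_quat_def one_quat_def plus_quat_def minus_quat_def
        uminus_quat_def times_quat_def algebra_simps)

end

text \<open>An n1 x n2 x n3 quaternion tensor is a function T :: nat => nat => nat => quat,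
meaningful on indices i < n1, j < n2, k < n3 (0-based).  Entries outside the box are
ignored: equality of tensors is equality on the box.\<close>

definition is_simple_tensor :: "nat \<Rightarrow> nat \<Rightarrow> nat \<Rightarrow> (nat \<Rightarrow> nat \<Rightarrow> nat \<Rightarrow> quat) \<Rightarrow> bool" where
  "is_simple_tensor n1 n2 n3 T \<longleftrightarrow>
     (\<exists>i<n1. \<exists>j<n2. \<exists>k<n3. T i j k \<noteq> 0) \<and>
     (\<exists>a b c :: nat \<Rightarrow> quat. \<forall>i<n1. \<forall>j<n2. \<forall>k<n3. T i j k = a i * b j * c k)"

definition sum_of_simple :: "nat \<Rightarrow> nat \<Rightarrow> nat \<Rightarrow> nat \<Rightarrow> (nat \<Rightarrow> nat \<Rightarrow> nat \<Rightarrow> quat) \<Rightarrow> bool" where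
  "sum_of_simple n1 n2 n3 r T \<longleftrightarrow>
     (\<exists>S :: nat \<Rightarrow> nat \<Rightarrow> nat \<Rightarrow> nat \<Rightarrow> quat.
        (\<forall>l<r. is_simple_tensor n1 n2 n3 (S l)) \<and>
        (\<forall>i<n1. \<forall>j<n2. \<forall>k<n3. T i j k = (\<Sum>l<r. S l i j k)))"

definition tensor_rank :: "nat \<Rightarrow> nat \<Rightarrow> nat \<Rightarrow> (nat \<Rightarrow> nat \<Rightarrow> nat \<Rightarrow> quat) \<Rightarrow> nat" where
  "tensor_rank n1 n2 n3 T = (LEAST r. sum_of_simple n1 n2 n3 r T)"

end

theory Submission
  imports Defs
begin

instantiation quat :: division_ring
begin
definition "inverse q = (let n = (Re q)^2 + (Im1 q)^2 + (Im2 q)^2 + (Im3 q)^2 in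
   Quat (Re q / n) (- Im1 q / n) (- Im2 q / n) (- Im3 q / n))"
definition "(x::quat) div y = x * inverse y"
instance
proof
  fix a :: quat
  assume "a \<noteq> 0"
  then obtain w x y z where a: "a = Quat w x y z" and "(w,x,y,z) \<noteq> (0,0,0,0)"
    by (cases a) (auto simp: zero_quat_def)
  hence n: "w*w + x*x + y*y + z*z \<noteq> 0"
    by (smt (verit) prod.inject zero_le_square not_sum_squares_lt_zero sum_squares_eq_zero_iff)
  have e: "(w*w + x*x + y*y + z*z) / (w*w + x*x + y*y + z*z) = 1" using n by simp
  show "inverse a * a = 1" using n e unfolding a
    by (simp add: inverse_quat_def times_quat_def one_quat_def Let_def quat_eq_iff power2_eq_square
        add_divide_distrib[symmetric] diff_divide_distrib[symmetric] algebra_simps)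
  show "a * inverse a = 1" using n e unfolding a
    by (simp add: inverse_quat_def times_quat_def one_quat_def Let_def quat_eq_iff power2_eq_square
        add_divide_distrib[symmetric] diff_divide_distrib[symmetric] algebra_simps)
next
  fix a b :: quat show "a div b = a * inverse b" by (simp add: divide_quat_def)
next
  show "inverse (0::quat) = 0" by (simp add: inverse_quat_def zero_quat_def)
qed
end

definition rq :: "real \<Rightarrow> quat" where "rq r = Quat r 0 0 0"

lemma rq_comm: "rq r * q = q * rq r"
  by (simp add: rq_def times_quat_def quat_eq_iff)
lemma rq_diff: "rq a - rq b = rq (a - b)"
  by (simp add: rq_def minus_quat_def)
lemma rq_Re: "Re (rq a) = a" by (simp add: rq_def)
lemma rq_1: "rq 1 = 1" by (simp add: rq_def one_quat_def)
lemma rq_0: "rq 0 = 0" by (simp add: rq_def zero_quat_def)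
lemma rq_nz: "a \<noteq> 0 \<Longrightarrow> rq a \<noteq> 0" by (simp add: rq_def zero_quat_def)
lemma Re_diff: "Re (a - b) = Re a - Re b" by (simp add: minus_quat_def)
lemma Re_zero: "Re 0 = 0" by (simp add: zero_quat_def)

lemma ne_by_Re: "Re a \<noteq> Re b \<Longrightarrow> a - b \<noteq> 0"
  using Re_diff[of a b] Re_zero by auto


type_synonym mat = "nat \<Rightarrow> nat \<Rightarrow> quat"

lemma lt3: "(i::nat) < 3 \<longleftrightarrow> i = 0 \<or> i = 1 \<or> i = 2" by auto
lemma all3: "(\<forall>i::nat. i < 3 \<longrightarrow> P i) \<longleftrightarrow> P 0 \<and> P 1 \<and> P 2"
  by (auto simp: lt3)
lemma sum3: "(\<Sum>l<3::nat. f l) = f 0 + f 1 + f 2"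
  by (simp add: numeral_3_eq_3 eval_nat_numeral)

definition eq3 :: "mat \<Rightarrow> mat \<Rightarrow> bool" where
  "eq3 A B \<longleftrightarrow> (\<forall>i<3. \<forall>k<3. A i k = B i k)"
definition mm :: "mat \<Rightarrow> mat \<Rightarrow> mat" where
  "mm A B = (\<lambda>i k. A i 0 * B 0 k + A i 1 * B 1 k + A i 2 * B 2 k)"
definition idm :: mat where "idm = (\<lambda>i k. if i = k then 1 else 0)"

definition rk2 :: "nat \<Rightarrow> mat \<Rightarrow> mat \<Rightarrow> bool" where
 "rk2 r A B \<longleftrightarrow> (\<exists>(a::nat\<Rightarrow>nat\<Rightarrow>quat) (c::nat\<Rightarrow>nat\<Rightarrow>quat) (\<beta>::nat\<Rightarrow>quat) (\<gamma>::nat\<Rightarrow>quat).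
    \<forall>i<3. \<forall>k<3. A i k = (\<Sum>l<r. a l i * \<beta> l * c l k) \<and> B i k = (\<Sum>l<r. a l i * \<gamma> l * c l k))"

lemma rk2I:
  assumes "\<forall>i<3. \<forall>k<3. A i k = (\<Sum>l<r. a l i * \<beta> l * c l k) \<and> B i k = (\<Sum>l<r. a l i * \<gamma> l * c l k)"
  shows "rk2 r A B"
  using assms unfolding rk2_def by blast

lemma mm_assoc: "mm (mm A B) C = mm A (mm B C)"
  by (simp add: mm_def algebra_simps fun_eq_iff)

lemma mm_idl: "eq3 (mm idm A) A" by (simp add: eq3_def mm_def idm_def all3)
lemma mm_idr: "eq3 (mm A idm) A" by (simp add: eq3_def mm_def idm_def all3)
lemma eq3_sym: "eq3 A B \<Longrightarrow> eq3 B A" by (simp add: eq3_def)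
lemma eq3_trans: "eq3 A B \<Longrightarrow> eq3 B C \<Longrightarrow> eq3 A C" by (simp add: eq3_def)
lemma mm_cong: "eq3 A A' \<Longrightarrow> eq3 B B' \<Longrightarrow> eq3 (mm A B) (mm A' B')"
  by (simp add: eq3_def mm_def all3)

lemma sum_mult_sum3:
  fixes a c :: "nat \<Rightarrow> nat \<Rightarrow> quat" and b :: "nat \<Rightarrow> quat"
  shows "(\<Sum>l<r. (p0 * a l 0 + p1 * a l 1 + p2 * a l 2) * b l * (c l 0 * q0 + c l 1 * q1 + c l 2 * q2))
   = p0 * (\<Sum>l<r. a l 0 * b l * c l 0) * q0 + p0 * (\<Sum>l<r. a l 0 * b l * c l 1) * q1 + p0 * (\<Sum>l<r. a l 0 * b l * c l 2) * q2 + p1 * (\<Sum>l<r. a l 1 * b l * c l 0) * q0 + p1 * (\<Sum>l<r. a l 1 * b l * c l 1) * q1 + p1 * (\<Sum>l<r. a l 1 * b l * c l 2) * q2 + p2 * (\<Sum>l<r. a l 2 * b l * c l 0) * q0 + p2 * (\<Sum>l<r. a l 2 * b l * c l 1) * q1 + p2 * (\<Sum>l<r. a l 2 * b l * c l 2) * q2"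
proof -
  have "(\<Sum>l<r. (p0 * a l 0 + p1 * a l 1 + p2 * a l 2) * b l * (c l 0 * q0 + c l 1 * q1 + c l 2 * q2))
     = (\<Sum>l<r. p0 * (a l 0 * b l * c l 0) * q0 + p0 * (a l 0 * b l * c l 1) * q1 + p0 * (a l 0 * b l * c l 2) * q2 + p1 * (a l 1 * b l * c l 0) * q0 + p1 * (a l 1 * b l * c l 1) * q1 + p1 * (a l 1 * b l * c l 2) * q2 + p2 * (a l 2 * b l * c l 0) * q0 + p2 * (a l 2 * b l * c l 1) * q1 + p2 * (a l 2 * b l * c l 2) * q2)"
    by (rule sum.cong) (simp_all add: algebra_simps)
  also have "\<dots> = p0 * (\<Sum>l<r. a l 0 * b l * c l 0) * q0 + p0 * (\<Sum>l<r. a l 0 * b l * c l 1) * q1 + p0 * (\<Sum>l<r. a l 0 * b l * c l 2) * q2 + p1 * (\<Sum>l<r. a l 1 * b l * c l 0) * q0 + p1 * (\<Sum>l<r. a l 1 * b l * c l 1) * q1 + p1 * (\<Sum>l<r. a l 1 * b l * c l 2) * q2 + p2 * (\<Sum>l<r. a l 2 * b l * c l 0) * q0 + p2 * (\<Sum>l<r. a l 2 * b l * c l 1) * q1 + p2 * (\<Sum>l<r. a l 2 * b l * c l 2) * q2"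
    by (simp add: sum.distrib sum_distrib_left sum_distrib_right)
  finally show ?thesis .
qed

lemma rk2_transform:
  assumes "rk2 r A' B'" "eq3 A (mm (mm P A') Q)" "eq3 B (mm (mm P B') Q)"
  shows "rk2 r A B"
proof -
  obtain a c \<beta> \<gamma> where h: "\<forall>i<3. \<forall>k<3. A' i k = (\<Sum>l<r. a l i * \<beta> l * c l k) \<and> B' i k = (\<Sum>l<r. a l i * \<gamma> l * c l k)"
    using assms(1) unfolding rk2_def by blast
  let ?a = "\<lambda>l i. P i 0 * a l 0 + P i 1 * a l 1 + P i 2 * a l 2"
  let ?c = "\<lambda>l k. c l 0 * Q 0 k + c l 1 * Q 1 k + c l 2 * Q 2 k"
  have "\<forall>i<3. \<forall>k<3. A i k = (\<Sum>l<r. ?a l i * \<beta> l * ?c l k) \<and> B i k = (\<Sum>l<r. ?a l i * \<gamma> l * ?c l k)"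
    using assms(2,3) h unfolding sum_mult_sum3
    by (simp add: eq3_def mm_def all3 algebra_simps)
  thus ?thesis 
    by (rule rk2I[where a="?a" and c="?c" and \<beta>=\<beta> and \<gamma>=\<gamma>])
qed


lemma rk2_cong: assumes "rk2 r A B" "eq3 A A'" "eq3 B B'" shows "rk2 r A' B'"
proof -
  obtain a c \<beta> \<gamma> where h: "\<forall>i<3. \<forall>k<3. A i k = (\<Sum>l<r. a l i * \<beta> l * c l k) \<and> B i k = (\<Sum>l<r. a l i * \<gamma> l * c l k)"
    using assms(1) unfolding rk2_def by blast
  show ?thesis
    by (rule rk2I[where a=a and c=c and \<beta>=\<beta> and \<gamma>=\<gamma>]) (use h assms(2,3) in \<open>simp add: eq3_def\<close>)
qed

lemma rk2_comp:
  assumes "rk2 r A' B'" "\<forall>i<3. f i < (3::nat)" "\<forall>k<3. g k < (3::nat)"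
    "\<forall>i<3. \<forall>k<3. A i k = A' (f i) (g k) \<and> B i k = B' (f i) (g k)"
  shows "rk2 r A B"
proof -
  obtain a c \<beta> \<gamma> where h: "\<forall>i<3. \<forall>k<3. A' i k = (\<Sum>l<r. a l i * \<beta> l * c l k) \<and> B' i k = (\<Sum>l<r. a l i * \<gamma> l * c l k)"
    using assms(1) unfolding rk2_def by blast
  have "\<forall>i<3. \<forall>k<3. A i k = (\<Sum>l<r. a l (f i) * \<beta> l * c l (g k)) \<and> B i k = (\<Sum>l<r. a l (f i) * \<gamma> l * c l (g k))"
    using h assms(2-4) by simp
  thus ?thesis 
    by (rule rk2I[where a="\<lambda>l i. a l (f i)" and c="\<lambda>l k. c l (g k)" and \<beta>=\<beta> and \<gamma>=\<gamma>])
qed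

lemma sum_split_nat: fixes f :: "nat \<Rightarrow> 'a::comm_monoid_add" shows "(\<Sum>l<r+s. f l) = (\<Sum>l<r. f l) + (\<Sum>l<s. f (r+l))"
  by (induction s) (simp_all add: add.assoc)

lemma rk2_add:
  assumes "rk2 r A B" "rk2 s A' B'"
  shows "rk2 (r+s) (\<lambda>i k. A i k + A' i k) (\<lambda>i k. B i k + B' i k)"
proof -
  obtain a c \<beta> \<gamma> where h: "\<forall>i<3. \<forall>k<3. A i k = (\<Sum>l<r. a l i * \<beta> l * c l k) \<and> B i k = (\<Sum>l<r. a l i * \<gamma> l * c l k)"
    using assms(1) unfolding rk2_def by blast
  obtain a' c' \<beta>' \<gamma>' where h': "\<forall>i<3. \<forall>k<3. A' i k = (\<Sum>l<s. a' l i * \<beta>' l * c' l k) \<and> B' i k = (\<Sum>l<s. a' l i * \<gamma>' l * c' l k)"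
    using assms(2) unfolding rk2_def by blast
  define a2 where "a2 = (\<lambda>l. if l < r then a l else a' (l - r))"
  define c2 where "c2 = (\<lambda>l. if l < r then c l else c' (l - r))"
  define b2 where "b2 = (\<lambda>l. if l < r then \<beta> l else \<beta>' (l - r))"
  define g2 where "g2 = (\<lambda>l. if l < r then \<gamma> l else \<gamma>' (l - r))"
  have "\<forall>i<3. \<forall>k<3. A i k + A' i k = (\<Sum>l<r+s. a2 l i * b2 l * c2 l k) \<and> B i k + B' i k = (\<Sum>l<r+s. a2 l i * g2 l * c2 l k)"
    using h h' unfolding sum_split_nat by (simp add: a2_def b2_def c2_def g2_def)
  thus ?thesis 
    by (rule rk2I[where a=a2 and c=c2 and \<beta>=b2 and \<gamma>=g2])
qed

lemma rk2_add':
  assumes "rk2 r A B" "rk2 s A' B'" "eq3 A2 (\<lambda>i k. A i k + A' i k)" "eq3 B2 (\<lambda>i k. B i k + B' i k)" "r + s \<le> n"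
  shows "rk2 n A2 B2"
proof -
  have "rk2 (r+s) A2 B2" using rk2_add[OF assms(1,2)] assms(3,4) rk2_cong eq3_sym by blast
  moreover have "rk2 (n - (r+s)) (\<lambda>_ _. 0) (\<lambda>_ _. 0)"
    unfolding rk2_def by (intro exI[where x="\<lambda>_ _. 0"]) simp
  ultimately have "rk2 (r + s + (n - (r+s))) (\<lambda>i k. A2 i k + 0) (\<lambda>i k. B2 i k + 0)"
    by (rule rk2_add)
  thus ?thesis using assms(5) by simp
qed

lemma rk2_one: "rk2 1 (\<lambda>i k. x i * \<alpha> * y k) (\<lambda>i k. x i * \<beta> * y k)"
  by (rule rk2I[where a="\<lambda>_. x" and c="\<lambda>_. y" and \<beta>="\<lambda>_. \<alpha>" and \<gamma>="\<lambda>_. \<beta>"]) simp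

lemma rk2_B3: "rk2 3 (\<lambda>_ _. 0) M"
proof -
  have "\<forall>i<3. \<forall>k<3. (0::quat) = (\<Sum>l<3. M i l * 0 * (if l = k then 1 else 0)) \<and>
       M i k = (\<Sum>l<3. M i l * 1 * (if l = k then 1 else 0))"
    by (simp add: sum3 all3)
  thus ?thesis 
    by (rule rk2I[where a="\<lambda>l i. M i l" and c="\<lambda>l k. if l = k then 1 else 0" and \<beta>="\<lambda>_. 0" and \<gamma>="\<lambda>_. 1"])
qed

definition dg :: "(nat \<Rightarrow> quat) \<Rightarrow> mat" where "dg \<alpha> = (\<lambda>i k. if i = k then \<alpha> i else 0)"

lemma rk2_diag: "rk2 3 (mm (mm S (dg \<alpha>)) S') (mm (mm S (dg \<beta>)) S')"
proof -
  have "\<forall>i<3. \<forall>k<3. mm (mm S (dg \<alpha>)) S' i k = (\<Sum>l<3. S i l * \<alpha> l * S' l k) \<and>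
       mm (mm S (dg \<beta>)) S' i k = (\<Sum>l<3. S i l * \<beta> l * S' l k)"
    by (simp add: sum3 mm_def dg_def)
  thus ?thesis 
    by (rule rk2I[where a="\<lambda>l i. S i l" and c="\<lambda>l k. S' l k" and \<beta>=\<alpha> and \<gamma>=\<beta>])
qed

lemma sylv_diag:
  assumes "eq3 (mm S S') idm" "eq3 (mm U S) (mm S D)"
  shows "eq3 U (mm (mm S D) S')"
proof -
  have "eq3 (mm U (mm S S')) (mm U idm)" using mm_cong[OF _ assms(1), of U U] by (simp add: eq3_def)
  hence "eq3 U (mm U (mm S S'))" using mm_idr[of U] by (simp add: eq3_def)
  also have "mm U (mm S S') = mm (mm U S) S'" by (simp add: mm_assoc)
  finally have 1: "eq3 U (mm (mm U S) S')" .
  have "eq3 (mm (mm U S) S') (mm (mm S D) S')" using mm_cong[OF assms(2), of S' S'] by (simp add: eq3_def)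
  thus ?thesis using 1 eq3_trans by blast
qed

lemma rk2_equiv:
  assumes "eq3 (mm P P') idm" "eq3 (mm Q' Q) idm" "eq3 A (mm (mm P A0) Q)" "\<And>B. rk2 r A0 B"
  shows "rk2 r A B"
proof -
  have "mm (mm P (mm (mm P' B) Q')) Q = mm (mm (mm P P') B) (mm Q' Q)" by (simp add: mm_assoc)
  moreover have "eq3 (mm (mm (mm P P') B) (mm Q' Q)) (mm (mm idm B) idm)"
    by (intro mm_cong assms(1,2)) (simp add: eq3_def)
  moreover have "eq3 (mm (mm idm B) idm) B"
    by (simp add: eq3_def mm_def idm_def all3)
  ultimately have "eq3 B (mm (mm P (mm (mm P' B) Q')) Q)" by (simp add: eq3_def)
  thus ?thesis using rk2_transform[OF assms(4) assms(3)] by blast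
qed


lemma inv_c1: "(a::quat) \<noteq> 0 \<Longrightarrow> a * (inverse a * b) = b"
  by (simp add: mult.assoc[symmetric])
lemma inv_c2: "(a::quat) \<noteq> 0 \<Longrightarrow> inverse a * (a * b) = b"
  by (simp add: mult.assoc[symmetric])
lemma rq_plus1: "rq (r + 1) = rq r + 1"
  by (simp add: rq_def one_quat_def plus_quat_def)

lemma rk2_mono: "rk2 r A B \<Longrightarrow> r \<le> n \<Longrightarrow> rk2 n A B"
  using rk2_add'[of r A B 0 "\<lambda>_ _. 0" "\<lambda>_ _. 0" A B n]
  by (simp add: eq3_def rk2_def)

lemma I_tri:
  assumes c20: "C 2 0 \<noteq> 0"
  shows "rk2 4 idm C"
proof -
  define c where "c = inverse (C 2 0)"
  define y1 where "y1 = c * C 2 1"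
  define \<delta> where "\<delta> = C 1 1 - C 1 0 * y1"
  define r0 where "r0 = \<bar>Re \<delta>\<bar> + 1"
  define d0 where "d0 = rq r0"
  define d2 where "d2 = rq (r0 + 1)"
  define w0 where "w0 = C 0 0 - d0"
  define y2 where "y2 = c * (C 2 2 - d2)"
  define w :: "nat \<Rightarrow> quat" where "w = (\<lambda>i. if i = 0 then w0 else C i 0)"
  define y :: "nat \<Rightarrow> quat" where "y = (\<lambda>k. if k = 0 then 1 else if k = 1 then y1 else y2)"
  define U where "U = (\<lambda>i k. C i k - w i * y k)"
  define u01 where "u01 = C 0 1 - w0 * y1"
  define u02 where "u02 = C 0 2 - w0 * y2"
  define u12 where "u12 = C 1 2 - C 1 0 * y2"
  define x where "x = u01 * inverse (\<delta> - d0)"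
  define z where "z = inverse (d2 - \<delta>) * u12"
  define yy where "yy = u01 * z + u02"
  define S :: mat where "S = (\<lambda>i k. if i = k then 1 else if i = 0 \<and> k = 1 then x else if i = 0 \<and> k = 2 then yy else if i = 1 \<and> k = 2 then z else 0)"
  define S' :: mat where "S' = (\<lambda>i k. if i = k then 1 else if i = 0 \<and> k = 1 then - x else if i = 0 \<and> k = 2 then x * z - yy else if i = 1 \<and> k = 2 then - z else 0)"
  define dd where "dd = (\<lambda>l::nat. if l = 0 then d0 else if l = 1 then \<delta> else d2)"
  have nz1: "\<delta> - d0 \<noteq> 0" by (rule ne_by_Re) (simp add: d0_def rq_Re r0_def)
  have nz2: "d2 - \<delta> \<noteq> 0" by (rule ne_by_Re) (simp add: d2_def rq_Re r0_def)
  have U00: "U 0 0 = d0" by (simp add: U_def w_def y_def w0_def)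
  have U10: "U 1 0 = 0" by (simp add: U_def w_def y_def)
  have U20: "U 2 0 = 0" by (simp add: U_def w_def y_def)
  have U21: "U 2 1 = 0" using c20 by (simp add: U_def w_def y_def y1_def c_def inv_c1)
  have U11: "U 1 1 = \<delta>" by (simp add: U_def w_def y_def \<delta>_def)
  have U22: "U 2 2 = d2" using c20 by (simp add: U_def w_def y_def y2_def c_def inv_c1)
  have U01: "U 0 1 = u01" by (simp add: U_def w_def y_def u01_def)
  have U02: "U 0 2 = u02" by (simp add: U_def w_def y_def u02_def)
  have U12: "U 1 2 = u12" by (simp add: U_def w_def y_def u12_def)
  have e1: "d0 * x + u01 = x * \<delta>"
  proof -
    have "x * (\<delta> - d0) = u01" using nz1 by (simp add: x_def mult.assoc)
    moreover have "d0 * x = x * d0" by (simp add: d0_def rq_comm)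
    ultimately show ?thesis by (simp add: algebra_simps)
  qed
  have e3: "\<delta> * z + u12 = z * d2"
  proof -
    have "(d2 - \<delta>) * z = u12" using nz2 by (simp add: z_def inv_c1)
    moreover have "d2 * z = z * d2" by (simp add: d2_def rq_comm)
    ultimately show ?thesis by (simp add: algebra_simps)
  qed
  have e2: "d0 * yy + u01 * z + u02 = yy * d2"
  proof -
    have "d2 = d0 + 1" by (simp add: d2_def d0_def rq_plus1)
    moreover have "d0 * yy = yy * d0" by (simp add: d0_def rq_comm)
    ultimately show ?thesis by (simp add: algebra_simps yy_def)
  qed
  have SS: "eq3 (mm S S') idm"
    by (simp add: eq3_def mm_def S_def S'_def all3 idm_def algebra_simps)
  have US: "eq3 (mm U S) (mm S (dg dd))"
    using e1 e2 e3 U00 U10 U20 U21 U11 U22 U01 U02 U12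
    by (simp add: eq3_def mm_def S_def all3 dg_def dd_def algebra_simps One_nat_def)
  have UD: "eq3 U (mm (mm S (dg dd)) S')" by (rule sylv_diag[OF SS US])
  have S1: "eq3 (mm S (dg (\<lambda>_. 1))) S" by (simp add: eq3_def mm_def dg_def all3)
  have I1: "eq3 idm (mm (mm S (dg (\<lambda>_. 1))) S')"
    using mm_cong[OF S1, of S' S'] SS by (simp add: eq3_def)
  show ?thesis
  proof (rule rk2_add'[OF rk2_diag[of S "\<lambda>_. 1" S' dd] rk2_one[of w 0 y 1]])
    show "eq3 idm (\<lambda>i k. mm (mm S (dg (\<lambda>_. 1))) S' i k + w i * 0 * y k)"
      using I1 by (simp add: eq3_def)
    show "eq3 C (\<lambda>i k. mm (mm S (dg dd)) S' i k + w i * 1 * y k)"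
      using UD by (simp add: eq3_def U_def diff_eq_eq)
  qed simp
qed


lemma rk2_perm:
  assumes "\<forall>i<3. f i < (3::nat) \<and> f (f i) = i" "\<forall>k<3. g k < (3::nat) \<and> g (g k) = k"
    "rk2 r (\<lambda>i k. A (f i) (g k)) (\<lambda>i k. B (f i) (g k))"
  shows "rk2 r A B"
  by (rule rk2_comp[OF assms(3), where f=f and g=g]) (use assms(1,2) in auto)

lemma I_diag:
  assumes "\<forall>i<3. \<forall>k<3. i \<noteq> k \<longrightarrow> C i k = 0"
  shows "rk2 4 idm C"
proof -
  have "rk2 3 (mm (mm idm (dg (\<lambda>_. 1))) idm) (mm (mm idm (dg (\<lambda>l. C l l))) idm)"
    by (rule rk2_diag)
  hence "rk2 3 idm C"
    by (rule rk2_cong) (use assms in \<open>auto simp: eq3_def mm_def idm_def dg_def all3\<close>)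
  thus ?thesis by (rule rk2_mono) simp
qed

lemma I_case: "rk2 4 idm C"
proof (cases "\<exists>p<3. \<exists>q<3. p \<noteq> q \<and> C p q \<noteq> 0")
  case False
  thus ?thesis by (intro I_diag) auto
next
  case True
  then obtain p q where pq: "p < 3" "q < 3" "p \<noteq> q" "C p q \<noteq> 0" by blast
  define \<pi> where "\<pi> = (\<lambda>i::nat. if i = 2 then p else if i = 0 then q else 3 - p - q)"
  define \<rho> where "\<rho> = (\<lambda>j::nat. if j = p then 2::nat else if j = q then 0 else 1)"
  have h1: "\<forall>j<3. \<pi> (\<rho> j) = j \<and> \<rho> j < 3" using pq unfolding \<pi>_def \<rho>_def by (auto simp: lt3)
  have h2: "\<forall>i<3. \<forall>k<3. (\<rho> i = \<rho> k) = (i = k)" using pq unfolding \<rho>_def by (auto simp: lt3)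
  have "rk2 4 idm (\<lambda>i k. C (\<pi> i) (\<pi> k))" by (rule I_tri) (use pq in \<open>simp add: \<pi>_def\<close>)
  thus ?thesis
    by (rule rk2_comp[where f=\<rho> and g=\<rho>]) (use h1 h2 in \<open>auto simp: idm_def\<close>)
qed


definition D2 :: mat where "D2 = (\<lambda>i k. if i = k \<and> i < 2 then 1 else 0)"
definition emb :: "mat \<Rightarrow> mat" where "emb C = (\<lambda>i k. if i < 2 \<and> k < 2 then C i k else 0)"

lemma sum2: "(\<Sum>l<2::nat. f l) = f 0 + f 1"
  by (simp add: eval_nat_numeral)

lemma rk2_diag2:
  assumes "\<alpha> 2 = 0" "\<beta> 2 = 0"
  shows "rk2 2 (mm (mm S (dg \<alpha>)) S') (mm (mm S (dg \<beta>)) S')"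
proof -
  have "\<forall>i<3. \<forall>k<3. mm (mm S (dg \<alpha>)) S' i k = (\<Sum>l<2. S i l * \<alpha> l * S' l k) \<and>
       mm (mm S (dg \<beta>)) S' i k = (\<Sum>l<2. S i l * \<beta> l * S' l k)"
    using assms by (simp add: sum2 mm_def dg_def)
  thus ?thesis
    by (rule rk2I[where a="\<lambda>l i. S i l" and c="\<lambda>l k. S' l k" and \<beta>=\<alpha> and \<gamma>=\<beta>])
qed

lemma T2:
  assumes "C 1 0 = 0" "C 0 0 = rq r" "Re (C 1 1) \<noteq> r"
  shows "rk2 2 D2 (emb C)"
proof -
  define x where "x = C 0 1 * inverse (C 1 1 - C 0 0)"
  define S :: mat where "S = (\<lambda>i k. if i = k then 1 else if i = 0 \<and> k = 1 then x else 0)"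
  define S' :: mat where "S' = (\<lambda>i k. if i = k then 1 else if i = 0 \<and> k = 1 then - x else 0)"
  define dd where "dd = (\<lambda>l::nat. if l = 0 then C 0 0 else if l = 1 then C 1 1 else 0)"
  have nz: "C 1 1 - C 0 0 \<noteq> 0" by (rule ne_by_Re) (use assms in \<open>simp add: rq_Re\<close>)
  have e1: "C 0 0 * x + C 0 1 = x * C 1 1"
  proof -
    have "x * (C 1 1 - C 0 0) = C 0 1" using nz by (simp add: x_def mult.assoc)
    moreover have "C 0 0 * x = x * C 0 0" by (simp add: assms(2) rq_comm)
    ultimately show ?thesis by (simp add: algebra_simps)
  qed
  have SS: "eq3 (mm S S') idm"
    by (simp add: eq3_def mm_def S_def S'_def all3 idm_def algebra_simps)
  have US: "eq3 (mm (emb C) S) (mm S (dg dd))"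
    using e1 assms(1)
    by (simp add: eq3_def mm_def S_def all3 dg_def dd_def emb_def algebra_simps One_nat_def)
  have UD: "eq3 (emb C) (mm (mm S (dg dd)) S')" by (rule sylv_diag[OF SS US])
  have D: "eq3 D2 (mm (mm S (dg (\<lambda>l. if l < 2 then 1 else 0))) S')"
    by (simp add: eq3_def mm_def S_def S'_def all3 dg_def D2_def)
  show ?thesis
    by (rule rk2_cong[OF rk2_diag2[of "\<lambda>l. if l < 2 then 1 else 0" dd S S']])
       (use D UD in \<open>simp_all add: dd_def eq3_sym\<close>)
qed

lemma G2: "rk2 3 D2 (emb C)"
proof -
  define r where "r = \<bar>Re (C 1 1)\<bar> + 1"
  define C' where "C' = (\<lambda>i k. if i = 0 \<and> k = 0 then rq r else if i = 1 \<and> k = 0 then 0 else C i k)"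
  define w :: "nat \<Rightarrow> quat" where "w = (\<lambda>i. if i = 0 then C 0 0 - rq r else if i = 1 then C 1 0 else 0)"
  define e :: "nat \<Rightarrow> quat" where "e = (\<lambda>k. if k = 0 then 1 else 0)"
  have "rk2 2 D2 (emb C')" by (rule T2[where r=r]) (simp_all add: C'_def r_def)
  thus ?thesis
  proof (rule rk2_add'[OF _ rk2_one[of w 0 e 1]])
    show "eq3 D2 (\<lambda>i k. D2 i k + w i * 0 * e k)" by (simp add: eq3_def)
    show "eq3 (emb C) (\<lambda>i k. emb C' i k + w i * 1 * e k)"
      by (simp add: eq3_def emb_def C'_def w_def e_def all3)
  qed simp
qed


lemma D2_i:
  assumes b: "B 2 2 \<noteq> 0"
  shows "rk2 4 D2 B"
proof -
  define ib where "ib = inverse (B 2 2)"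
  define P :: mat where "P = (\<lambda>i k. if i = k then 1 else if k = 2 \<and> i < 2 then B i 2 * ib else 0)"
  define Q :: mat where "Q = (\<lambda>i k. if i = k then 1 else if i = 2 \<and> k < 2 then ib * B 2 k else 0)"
  define C2 :: mat where "C2 = (\<lambda>i k. B i k - B i 2 * ib * B 2 k)"
  define B' :: mat where "B' = (\<lambda>i k. if i < 2 \<and> k < 2 then C2 i k else if i = 2 \<and> k = 2 then B 2 2 else 0)"
  define e :: "nat \<Rightarrow> quat" where "e = (\<lambda>k. if k = 2 then 1 else 0)"
  have "rk2 4 D2 B'"
  proof (rule rk2_add'[OF G2[of C2] rk2_one[of e 0 e "B 2 2"]])
    show "eq3 D2 (\<lambda>i k. D2 i k + e i * 0 * e k)" by (simp add: eq3_def)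
    show "eq3 B' (\<lambda>i k. emb C2 i k + e i * B 2 2 * e k)"
      by (simp add: eq3_def emb_def B'_def e_def all3)
  qed simp
  moreover have "eq3 D2 (mm (mm P D2) Q)"
    by (simp add: eq3_def mm_def P_def Q_def D2_def all3)
  moreover have "eq3 B (mm (mm P B') Q)"
    using b by (simp add: eq3_def mm_def P_def Q_def B'_def C2_def all3 ib_def algebra_simps inv_c1 inv_c2)
  ultimately show ?thesis by (rule rk2_transform)
qed

lemma D2_ii:
  assumes "B 2 2 = 0" "B 2 0 = 0" "B 2 1 = 0"
  shows "rk2 4 D2 B"
proof -
  define v :: "nat \<Rightarrow> quat" where "v = (\<lambda>i. if i < 2 then B i 2 else 0)"
  define e :: "nat \<Rightarrow> quat" where "e = (\<lambda>k. if k = 2 then 1 else 0)"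
  show ?thesis
  proof (rule rk2_add'[OF G2[of B] rk2_one[of v 0 e 1]])
    show "eq3 D2 (\<lambda>i k. D2 i k + v i * 0 * e k)" by (simp add: eq3_def)
    show "eq3 B (\<lambda>i k. emb B i k + v i * 1 * e k)"
      using assms by (simp add: eq3_def emb_def v_def e_def all3)
  qed simp
qed

lemma D2_iii:
  assumes b: "B 2 2 = 0" and u: "B 2 0 \<noteq> 0"
  shows "rk2 4 D2 B"
proof -
  define iu where "iu = inverse (B 2 0)"
  define p1 where "p1 = B 1 0 * iu"
  define \<delta> where "\<delta> = B 1 1 - p1 * B 2 1"
  define r where "r = \<bar>Re \<delta>\<bar> + 1"
  define p0 where "p0 = (B 0 0 - rq r) * iu"
  define P :: mat where "P = (\<lambda>i k. if i = k then 1 else if k = 2 \<and> i = 0 then p0 else if k = 2 \<and> i = 1 then p1 else 0)"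
  define B' :: mat where "B' = (\<lambda>i k. if i < 2 then B i k - P i 2 * B 2 k else B i k)"
  define v :: "nat \<Rightarrow> quat" where "v = (\<lambda>i. if i < 2 then B i 2 else 0)"
  define e :: "nat \<Rightarrow> quat" where "e = (\<lambda>k. if k = 2 then 1 else 0)"
  define uu :: "nat \<Rightarrow> quat" where "uu = (\<lambda>k. if k < 2 then B 2 k else 0)"
  have B'00: "B' 0 0 = rq r" using u by (simp add: B'_def P_def p0_def iu_def mult.assoc)
  have B'10: "B' 1 0 = 0" using u by (simp add: B'_def P_def p1_def iu_def mult.assoc)
  have B'11: "B' 1 1 = \<delta>" by (simp add: B'_def P_def \<delta>_def)
  have t: "rk2 2 D2 (emb B')" by (rule T2[where r=r]) (simp_all add: B'00 B'10[unfolded One_nat_def] B'11[unfolded One_nat_def] r_def)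
  have t2: "rk2 3 D2 (\<lambda>i k. emb B' i k + v i * 1 * e k)"
    by (rule rk2_add'[OF t rk2_one[of v 0 e 1]]) (simp_all add: eq3_def)
  have "rk2 4 D2 B'"
  proof (rule rk2_add'[OF t2 rk2_one[of e 0 uu 1]])
    show "eq3 D2 (\<lambda>i k. D2 i k + e i * 0 * uu k)" by (simp add: eq3_def)
    show "eq3 B' (\<lambda>i k. (emb B' i k + v i * 1 * e k) + e i * 1 * uu k)"
      using b by (simp add: eq3_def emb_def v_def e_def uu_def all3 B'_def P_def)
  qed simp
  moreover have "eq3 D2 (mm (mm P D2) idm)"
    by (simp add: eq3_def mm_def P_def idm_def D2_def all3)
  moreover have "eq3 B (mm (mm P B') idm)"
    by (simp add: eq3_def mm_def P_def idm_def B'_def all3 algebra_simps)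
  ultimately show ?thesis by (rule rk2_transform)
qed

lemma D2_case: "rk2 4 D2 B"
proof (cases "B 2 2 = 0")
  case False thus ?thesis by (rule D2_i)
next
  case b: True
  show ?thesis
  proof (cases "B 2 0 = 0")
    case False thus ?thesis using b D2_iii by blast
  next
    case u0: True
    show ?thesis
    proof (cases "B 2 1 = 0")
      case True thus ?thesis using b u0 D2_ii by blast
    next
      case False
      define sw where "sw = (\<lambda>i::nat. if i = 0 then 1::nat else if i = 1 then 0 else i)"
      have "rk2 4 D2 (\<lambda>i k. B (sw i) (sw k))" by (rule D2_iii) (use b False in \<open>simp_all add: sw_def\<close>)
      hence "rk2 4 (\<lambda>i k. D2 (sw i) (sw k)) (\<lambda>i k. B (sw i) (sw k))"
        by (rule rk2_cong) (auto simp: eq3_def D2_def sw_def all3)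
      thus ?thesis by (rule rk2_perm[rotated 2]) (auto simp: sw_def all3)
    qed
  qed
qed


lemma Z_case: "rk2 4 (\<lambda>_ _. 0) B"
  by (rule rk2_mono[OF rk2_B3]) simp

lemma E00_case: "rk2 4 (\<lambda>i k. if i = 0 \<and> k = 0 then 1 else 0) B"
proof -
  define e :: "nat \<Rightarrow> quat" where "e = (\<lambda>k. if k = 0 then 1 else 0)"
  show ?thesis
    by (rule rk2_add'[OF rk2_one[of e 1 e 0] rk2_B3[of B]]) (simp_all add: eq3_def e_def)
qed

definition blk :: "mat \<Rightarrow> mat" where
  "blk A = (\<lambda>i k. if i = 0 \<and> k = 0 then 1 else if i = 0 \<or> k = 0 then 0 else A i k - A i 0 * inverse (A 0 0) * A 0 k)"

lemma piv:
  assumes a: "A 0 0 \<noteq> 0" and h: "\<And>B. rk2 r (blk A) B"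
  shows "rk2 r A B"
proof -
  define ia where "ia = inverse (A 0 0)"
  define L :: mat where "L = (\<lambda>i k. if k = 0 then (if i = 0 then 1 else A i 0 * ia) else if i = k then 1 else 0)"
  define L' :: mat where "L' = (\<lambda>i k. if k = 0 then (if i = 0 then 1 else - (A i 0 * ia)) else if i = k then 1 else 0)"
  define U :: mat where "U = (\<lambda>i k. if i = 0 then A 0 k else if i = k then 1 else 0)"
  define U' :: mat where "U' = (\<lambda>i k. if i = 0 then (if k = 0 then ia else - (ia * A 0 k)) else if i = k then 1 else 0)"
  show ?thesis
  proof (rule rk2_equiv[OF _ _ _ h])
    show "eq3 (mm L L') idm" by (simp add: eq3_def mm_def L_def L'_def idm_def all3)
    show "eq3 (mm U' U) idm" using a by (simp add: eq3_def mm_def U_def U'_def idm_def all3 ia_def)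
    show "eq3 A (mm (mm L (blk A)) U)"
      using a by (simp add: eq3_def mm_def L_def U_def blk_def all3 ia_def algebra_simps inv_c1 inv_c2)
  qed
qed

lemma L3: "rk2 4 (dg (\<lambda>l. if l = 2 then s else 1)) B"
proof (cases "s = 0")
  case True
  thus ?thesis by (rule_tac rk2_cong[OF D2_case]) (auto simp: eq3_def D2_def dg_def all3)
next
  case False
  show ?thesis
  proof (rule rk2_equiv[OF _ _ _ I_case])
    show "eq3 (mm idm idm) idm" by (simp add: eq3_def mm_def idm_def all3)
    show "eq3 (mm (dg (\<lambda>l. if l = 2 then inverse s else 1)) (dg (\<lambda>l. if l = 2 then s else 1))) idm"
      using False by (simp add: eq3_def mm_def idm_def dg_def all3)
    show "eq3 (dg (\<lambda>l. if l = 2 then s else 1)) (mm (mm idm idm) (dg (\<lambda>l. if l = 2 then s else 1)))"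
      by (simp add: eq3_def mm_def idm_def dg_def all3)
  qed
qed

lemma L2b:
  assumes "A 0 0 = 1" "A 0 1 = 0" "A 0 2 = 0" "A 1 0 = 0" "A 2 0 = 0" "A 1 1 \<noteq> 0"
  shows "rk2 4 A B"
proof -
  define sw where "sw = (\<lambda>i::nat. if i = 0 then 1::nat else if i = 1 then 0 else i)"
  define A4 where "A4 = (\<lambda>i k. A (sw i) (sw k))"
  have "rk2 4 A4 (\<lambda>i k. B (sw i) (sw k))"
  proof (rule piv)
    show "A4 0 0 \<noteq> 0" using assms by (simp add: A4_def sw_def)
    fix B'
    show "rk2 4 (blk A4) B'"
      by (rule rk2_cong[OF L3[of "A 2 2 - A 2 1 * inverse (A 1 1) * A 1 2" B']])
        (use assms in \<open>auto simp: eq3_def blk_def A4_def sw_def dg_def all3\<close>)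
  qed
  thus ?thesis unfolding A4_def by (rule rk2_perm[rotated 2]) (auto simp: sw_def all3)
qed

lemma L2:
  assumes "A 0 0 = 1" "A 0 1 = 0" "A 0 2 = 0" "A 1 0 = 0" "A 2 0 = 0"
  shows "rk2 4 A B"
proof (cases "A 1 1 = 0 \<and> A 1 2 = 0 \<and> A 2 1 = 0 \<and> A 2 2 = 0")
  case True
  thus ?thesis
    by (rule_tac rk2_cong[OF E00_case]) (use assms in \<open>auto simp: eq3_def all3\<close>)
next
  case False
  then obtain p q where pq: "p \<in> {1,2}" "q \<in> {1,2}" "A p q \<noteq> 0" by auto
  define sp where "sp = (\<lambda>i::nat. if i = 1 then p else if i = p then 1 else i)"
  define sq where "sq = (\<lambda>i::nat. if i = 1 then q else if i = q then 1 else i)"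
  have "rk2 4 (\<lambda>i k. A (sp i) (sq k)) (\<lambda>i k. B (sp i) (sq k))"
    by (rule L2b) (use assms pq in \<open>auto simp: sp_def sq_def\<close>)
  thus ?thesis by (rule rk2_perm[rotated 2]) (use pq in \<open>auto simp: sp_def sq_def all3\<close>)
qed

lemma main2: "rk2 4 A B"
proof (cases "\<exists>p<3. \<exists>q<3. A p q \<noteq> 0")
  case False
  thus ?thesis by (rule_tac rk2_cong[OF Z_case]) (auto simp: eq3_def)
next
  case True
  then obtain p q where pq: "p < 3" "q < 3" "A p q \<noteq> 0" by blast
  define sp where "sp = (\<lambda>i::nat. if i = 0 then p else if i = p then 0 else i)"
  define sq where "sq = (\<lambda>i::nat. if i = 0 then q else if i = q then 0 else i)"
  define A1 where "A1 = (\<lambda>i k. A (sp i) (sq k))"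
  have "rk2 4 A1 (\<lambda>i k. B (sp i) (sq k))"
  proof (rule piv)
    show "A1 0 0 \<noteq> 0" using pq by (simp add: A1_def sp_def sq_def)
    fix B' show "rk2 4 (blk A1) B'"
      by (rule L2) (simp_all add: blk_def)
  qed
  thus ?thesis unfolding A1_def by (rule rk2_perm[rotated 2]) (use pq in \<open>auto simp: sp_def sq_def all3\<close>)
qed


lemma rk_to_sum:
  "\<forall>i<3. \<forall>j<2. \<forall>k<3. T i j k = (\<Sum>l<r. a l i * b l j * c l k) \<Longrightarrow>
   \<exists>r'\<le>r. sum_of_simple 3 2 3 r' T"
proof (induction r arbitrary: T)
  case 0
  hence "sum_of_simple 3 2 3 0 T" unfolding sum_of_simple_def by simp
  thus ?case by blast
next
  case (Suc r)
  define T' where "T' = (\<lambda>i j k. \<Sum>l<r. a l i * b l j * c l k)"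
  define X where "X = (\<lambda>i j k. a r i * b r j * c r k)"
  have T: "\<forall>i<3. \<forall>j<2. \<forall>k<3. T i j k = T' i j k + X i j k"
    using Suc.prems by (simp add: T'_def X_def)
  obtain r' S where r': "r' \<le> r" "\<forall>l<r'. is_simple_tensor 3 2 3 (S l)"
      "\<forall>i<3. \<forall>j<2. \<forall>k<3. T' i j k = (\<Sum>l<r'. S l i j k)"
    using Suc.IH[of T'] unfolding sum_of_simple_def T'_def by auto
  show ?case
  proof (cases "\<exists>i<3. \<exists>j<2. \<exists>k<3. X i j k \<noteq> 0")
    case False
    hence "sum_of_simple 3 2 3 r' T" unfolding sum_of_simple_def using r' T
      by (intro exI[where x=S]) auto
    thus ?thesis using r' by (intro exI[where x=r']) simp
  next
    case True
    define S' where "S' = S(r' := X)"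
    have "is_simple_tensor 3 2 3 X" unfolding is_simple_tensor_def using True
      by (auto simp: X_def)
    hence "\<forall>l<Suc r'. is_simple_tensor 3 2 3 (S' l)" using r'(2) by (auto simp: S'_def less_Suc_eq)
    moreover have "\<forall>i<3. \<forall>j<2. \<forall>k<3. T i j k = (\<Sum>l<Suc r'. S' l i j k)"
      using r'(3) T by (simp add: S'_def)
    ultimately have "sum_of_simple 3 2 3 (Suc r') T" unfolding sum_of_simple_def by blast
    thus ?thesis using r' by (intro exI[where x="Suc r'"]) simp
  qed
qed

theorem mainTheorem12:
  fixes T :: "nat \<Rightarrow> nat \<Rightarrow> nat \<Rightarrow> quat"
  shows "tensor_rank 3 2 3 T \<le> 4"
proof -
  obtain a c \<beta> \<gamma> where h: "\<forall>i<3. \<forall>k<3. T i 0 k = (\<Sum>l<4::nat. a l i * \<beta> l * c l k) \<and> T i 1 k = (\<Sum>l<4. a l i * \<gamma> l * c l k)"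
    using main2[of "\<lambda>i k. T i 0 k" "\<lambda>i k. T i 1 k"] unfolding rk2_def by blast
  define b where "b = (\<lambda>l (j::nat). if j = 0 then \<beta> l else \<gamma> l)"
  have "\<forall>i<3. \<forall>j<2. \<forall>k<3. T i j k = (\<Sum>l<4. a l i * b l j * c l k)"
  proof (intro allI impI)
    fix i j k :: nat assume "i < 3" "j < 2" "k < 3"
    moreover have "j = 0 \<or> j = 1" using \<open>j < 2\<close> by auto
    ultimately show "T i j k = (\<Sum>l<4. a l i * b l j * c l k)" using h by (auto simp: b_def)
  qed
  then obtain r' where "r' \<le> 4" "sum_of_simple 3 2 3 r' T" using rk_to_sum by blast
  thus ?thesis unfolding tensor_rank_def by (meson Least_le le_trans)
qed

end
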